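(* For any set of rule schemes $\mathcal{R}\subseteq\{N,H,P,F,wF\}$, if a sequent $\Gamma\Rightarrow A$ is valid in every $\mathbf{K}(\mathcal{R})$-Kripke model, then $i\mathbf{STL}(\mathcal{R})\vdash\Gamma\Rightarrow A$.
   Context: Formulas of $\mathcal{L}_\nabla$ are built from variables and constants $1,\top,\bot$ by $\wedge,\vee,\otimes,\to$ and unary $\nabla$. Sequents $\Gamma\Rightarrow A$ have $\Gamma$ a finite sequence; $\nabla\Gamma$ applies $\nabla$ to each member. $\mathbf{STL}$ has axioms $A\Rightarrow A$, $\Rightarrow1$, $\nabla1\Rightarrow1$, $\Gamma\Rightarrow\top$, $\Gamma,\bot,\Sigma\Rightarrow A$ and rules (premises / conclusion): cut: $\Gamma\Rightarrow A$, $\Pi,A,\Sigma\Rightarrow B$ / $\Pi,\Gamma,\Sigma\Rightarrow B$; $L\wedge$: $\Gamma,A,\Sigma\Rightarrow C$ / $\Gamma,A\wedge B,\Sigma\Rightarrow C$ and $\Gamma,B,\Sigma\Rightarrow C$ / $\Gamma,A\wedge B,\Sigma\Rightarrow C$; $R\wedge$: $\Gamma\Rightarrow A$, $\Gamma\Rightarrow B$ / $\Gamma\Rightarrow A\wedge B$; $L\vee$: $\Gamma,A,\Sigma\Rightarrow C$, $\Gamma,B,\Sigma\Rightarrow C$ / $\Gamma,A\vee B,\Sigma\Rightarrow C$; $R\vee$: $\Gamma\Rightarrow A$ / $\Gamma\Rightarrow A\vee B$ and $\Gamma\Rightarrow B$ / $\Gamma\Rightarrow A\vee B$; $L1$: $\Gamma,\Sigma\Rightarrow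 A$ / $\Gamma,1,\Sigma\Rightarrow A$; $L\otimes$: $\Gamma,A,B,\Sigma\Rightarrow C$ / $\Gamma,A\otimes B,\Sigma\Rightarrow C$; $R\otimes$: $\Gamma\Rightarrow A$, $\Sigma\Rightarrow B$ / $\Gamma,\Sigma\Rightarrow A\otimes B$; $(\nabla)$: $A\Rightarrow B$ / $\nabla A\Rightarrow\nabla B$; Oplax: $\nabla A,\nabla B\Rightarrow C$ / $\nabla(A\otimes B)\Rightarrow C$; $L\to$: $\Gamma\Rightarrow A$, $\Pi,B,\Sigma\Rightarrow C$ / $\Pi,\Gamma,\nabla(A\to B),\Sigma\Rightarrow C$; $R\to$: $A,\nabla\Gamma\Rightarrow B$ / $\Gamma\Rightarrow A\to B$. Schemes: $(N)$: $\Gamma\Rightarrow A$ / $\nabla\Gamma\Rightarrow\nabla A$; $(P)$: $\Gamma\Rightarrow\nabla A$ / $\Gamma\Rightarrow A$; $(F)$: $\Gamma\Rightarrow A$ / $\Gamma\Rightarrow\nabla A$; $(wF)$: $\nabla A\Rightarrow\bot$ / $A\Rightarrow\bot$; $(H)$: $\Gamma,A_1\to B_1,\dots,A_n\to B_n\Rightarrow C$ / $\nabla\Gamma,\nabla A_1\to\nabla B_1,\dots,\nabla A_n\to\nabla B_n\Rightarrow\nabla C$. $i\mathbf{STL}(\mathcal{R})$ is $\mathbf{STL}$ plus the schemes in $\mathcal{R}$ plus left weakening, contraction and exchange. A Kripke model is $(W,\le,R,V)$: $(W,\le)$ a poset, $R\subseteq W\times W$ with $(u,v)\in R$, $u'\le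 u$, $v\le v'$ implying $(u',v')\in R$, and $V$ assigning an upset to each variable. Forcing: $w\Vdash p$ iff $w\in V(p)$; $\top$, $1$ always forced; $\bot$ never; $\wedge$ and $\otimes$ both as conjunction; $\vee$ as disjunction; $w\Vdash A\to B$ iff for all $v$ with $(w,v)\in R$, $v\Vdash A$ implies $v\Vdash B$; $w\Vdash\nabla A$ iff there is $v$ with $(v,w)\in R$ and $v\Vdash A$. $\Gamma\Rightarrow A$ is valid if every $w$ forcing all of $\Gamma$ forces $A$. A $\mathbf{K}(\mathcal{R})$-Kripke model satisfies: for $(N)$, there is an order-preserving $\pi:W\to W$ with $(u,v)\in R$ iff $u\le\pi(v)$; for $(H)$, such $\pi$ exists and is an order isomorphism; for $(P)$, $R\subseteq\le$; for $(F)$, $R$ reflexive; for $(wF)$, $R$ serial; for each scheme in $\mathcal{R}$. *)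

theory Defs
  imports Main
begin

datatype 'a fm =
    Var 'a
  | One
  | Top
  | Bot
  | And "'a fm" "'a fm"
  | Or "'a fm" "'a fm"
  | Tens "'a fm" "'a fm"
  | Imp "'a fm" "'a fm"
  | Nab "'a fm"

datatype scheme = SN | SH | SP | SF | SwF

inductive deriv :: "scheme set \<Rightarrow> 'a fm list \<Rightarrow> 'a fm \<Rightarrow> bool" for Rs where
  ax_id: "deriv Rs [A] A"
| ax_one: "deriv Rs [] One"
| ax_nab_one: "deriv Rs [Nab One] One"
| ax_top: "deriv Rs \<Gamma> Top"
| ax_bot: "deriv Rs (\<Gamma> @ [Bot] @ \<Sigma>) A"
| cut: "deriv Rs \<Gamma> A \<Longrightarrow> deriv Rs (\<Pi> @ [A] @ \<Sigma>) B \<Longrightarrow> deriv Rs (\<Pi> @ \<Gamma> @ \<Sigma>) B"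
| L_and1: "deriv Rs (\<Gamma> @ [A] @ \<Sigma>) C \<Longrightarrow> deriv Rs (\<Gamma> @ [And A B] @ \<Sigma>) C"
| L_and2: "deriv Rs (\<Gamma> @ [B] @ \<Sigma>) C \<Longrightarrow> deriv Rs (\<Gamma> @ [And A B] @ \<Sigma>) C"
| R_and: "deriv Rs \<Gamma> A \<Longrightarrow> deriv Rs \<Gamma> B \<Longrightarrow> deriv Rs \<Gamma> (And A B)"
| L_or: "deriv Rs (\<Gamma> @ [A] @ \<Sigma>) C \<Longrightarrow> deriv Rs (\<Gamma> @ [B] @ \<Sigma>) C
         \<Longrightarrow> deriv Rs (\<Gamma> @ [Or A B] @ \<Sigma>) C"
| R_or1: "deriv Rs \<Gamma> A \<Longrightarrow> deriv Rs \<Gamma> (Or A B)"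
| R_or2: "deriv Rs \<Gamma> B \<Longrightarrow> deriv Rs \<Gamma> (Or A B)"
| L_one: "deriv Rs (\<Gamma> @ \<Sigma>) A \<Longrightarrow> deriv Rs (\<Gamma> @ [One] @ \<Sigma>) A"
| L_tens: "deriv Rs (\<Gamma> @ [A, B] @ \<Sigma>) C \<Longrightarrow> deriv Rs (\<Gamma> @ [Tens A B] @ \<Sigma>) C"
| R_tens: "deriv Rs \<Gamma> A \<Longrightarrow> deriv Rs \<Sigma> B \<Longrightarrow> deriv Rs (\<Gamma> @ \<Sigma>) (Tens A B)"
| nab: "deriv Rs [A] B \<Longrightarrow> deriv Rs [Nab A] (Nab B)"
| oplax: "deriv Rs [Nab A, Nab B] C \<Longrightarrow> deriv Rs [Nab (Tens A B)] C"
| L_imp: "deriv Rs \<Gamma> A \<Longrightarrow> deriv Rs (\<Pi> @ [B] @ \<Sigma>) C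
          \<Longrightarrow> deriv Rs (\<Pi> @ \<Gamma> @ [Nab (Imp A B)] @ \<Sigma>) C"
| R_imp: "deriv Rs (A # map Nab \<Gamma>) B \<Longrightarrow> deriv Rs \<Gamma> (Imp A B)"
| sch_N: "SN \<in> Rs \<Longrightarrow> deriv Rs \<Gamma> A \<Longrightarrow> deriv Rs (map Nab \<Gamma>) (Nab A)"
| sch_P: "SP \<in> Rs \<Longrightarrow> deriv Rs \<Gamma> (Nab A) \<Longrightarrow> deriv Rs \<Gamma> A"
| sch_F: "SF \<in> Rs \<Longrightarrow> deriv Rs \<Gamma> A \<Longrightarrow> deriv Rs \<Gamma> (Nab A)"
| sch_wF: "SwF \<in> Rs \<Longrightarrow> deriv Rs [Nab A] Bot \<Longrightarrow> deriv Rs [A] Bot"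
| sch_H: "SH \<in> Rs \<Longrightarrow> deriv Rs (\<Gamma> @ map (\<lambda>(a, b). Imp a b) ps) C
          \<Longrightarrow> deriv Rs (map Nab \<Gamma> @ map (\<lambda>(a, b). Imp (Nab a) (Nab b)) ps) (Nab C)"
| weak: "deriv Rs (\<Gamma> @ \<Sigma>) B \<Longrightarrow> deriv Rs (\<Gamma> @ [A] @ \<Sigma>) B"
| contr: "deriv Rs (\<Gamma> @ [A, A] @ \<Sigma>) B \<Longrightarrow> deriv Rs (\<Gamma> @ [A] @ \<Sigma>) B"
| exch: "deriv Rs (\<Gamma> @ [A, B] @ \<Sigma>) C \<Longrightarrow> deriv Rs (\<Gamma> @ [B, A] @ \<Sigma>) C"

definition kripke_model ::
  "'w set \<Rightarrow> ('w \<Rightarrow> 'w \<Rightarrow> bool) \<Rightarrow> ('w \<Rightarrow> 'w \<Rightarrow> bool) \<Rightarrow> ('a \<Rightarrow> 'w set) \<Rightarrow> bool" where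
  "kripke_model W le R V \<longleftrightarrow>
     (\<forall>u\<in>W. le u u) \<and>
     (\<forall>u\<in>W. \<forall>v\<in>W. le u v \<and> le v u \<longrightarrow> u = v) \<and>
     (\<forall>u\<in>W. \<forall>v\<in>W. \<forall>w\<in>W. le u v \<and> le v w \<longrightarrow> le u w) \<and>
     (\<forall>u\<in>W. \<forall>v\<in>W. \<forall>u'\<in>W. \<forall>v'\<in>W. R u v \<and> le u' u \<and> le v v' \<longrightarrow> R u' v') \<and>
     (\<forall>p. V p \<subseteq> W \<and> (\<forall>u\<in>V p. \<forall>v\<in>W. le u v \<longrightarrow> v \<in> V p))"

fun forces ::
  "'w set \<Rightarrow> ('w \<Rightarrow> 'w \<Rightarrow> bool) \<Rightarrow> ('w \<Rightarrow> 'w \<Rightarrow> bool) \<Rightarrow> ('a \<Rightarrow> 'w set) \<Rightarrow> 'w \<Rightarrow> 'a fm \<Rightarrow> bool" where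
  "forces W le R V w (Var p) = (w \<in> V p)"
| "forces W le R V w One = True"
| "forces W le R V w Top = True"
| "forces W le R V w Bot = False"
| "forces W le R V w (And A B) = (forces W le R V w A \<and> forces W le R V w B)"
| "forces W le R V w (Or A B) = (forces W le R V w A \<or> forces W le R V w B)"
| "forces W le R V w (Tens A B) = (forces W le R V w A \<and> forces W le R V w B)"
| "forces W le R V w (Imp A B) =
     (\<forall>v\<in>W. R w v \<longrightarrow> forces W le R V v A \<longrightarrow> forces W le R V v B)"
| "forces W le R V w (Nab A) = (\<exists>v\<in>W. R v w \<and> forces W le R V v A)"

definition valid_in ::
  "'w set \<Rightarrow> ('w \<Rightarrow> 'w \<Rightarrow> bool) \<Rightarrow> ('w \<Rightarrow> 'w \<Rightarrow> bool) \<Rightarrow> ('a \<Rightarrow> 'w set) \<Rightarrow> 'a fm list \<Rightarrow> 'a fm \<Rightarrow> bool" where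
  "valid_in W le R V \<Gamma> A \<longleftrightarrow>
     (\<forall>w\<in>W. (\<forall>B\<in>set \<Gamma>. forces W le R V w B) \<longrightarrow> forces W le R V w A)"

definition has_pi :: "'w set \<Rightarrow> ('w \<Rightarrow> 'w \<Rightarrow> bool) \<Rightarrow> ('w \<Rightarrow> 'w \<Rightarrow> bool) \<Rightarrow> ('w \<Rightarrow> 'w) \<Rightarrow> bool" where
  "has_pi W le R \<pi> \<longleftrightarrow>
     (\<forall>u\<in>W. \<pi> u \<in> W) \<and>
     (\<forall>u\<in>W. \<forall>v\<in>W. le u v \<longrightarrow> le (\<pi> u) (\<pi> v)) \<and>
     (\<forall>u\<in>W. \<forall>v\<in>W. R u v \<longleftrightarrow> le u (\<pi> v))"

definition K_model ::
  "scheme set \<Rightarrow> 'w set \<Rightarrow> ('w \<Rightarrow> 'w \<Rightarrow> bool) \<Rightarrow> ('w \<Rightarrow> 'w \<Rightarrow> bool) \<Rightarrow> ('a \<Rightarrow> 'w set) \<Rightarrow> bool" where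
  "K_model Rs W le R V \<longleftrightarrow>
     kripke_model W le R V \<and>
     (SN \<in> Rs \<longrightarrow> (\<exists>\<pi>. has_pi W le R \<pi>)) \<and>
     (SH \<in> Rs \<longrightarrow> (\<exists>\<pi>. has_pi W le R \<pi> \<and> bij_betw \<pi> W W \<and>
                        (\<forall>u\<in>W. \<forall>v\<in>W. le u v \<longleftrightarrow> le (\<pi> u) (\<pi> v)))) \<and>
     (SP \<in> Rs \<longrightarrow> (\<forall>u\<in>W. \<forall>v\<in>W. R u v \<longrightarrow> le u v)) \<and>
     (SF \<in> Rs \<longrightarrow> (\<forall>u\<in>W. R u u)) \<and>
     (SwF \<in> Rs \<longrightarrow> (\<forall>u\<in>W. \<exists>v\<in>W. R u v))"

end

theory Submission
  imports Defs
begin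


lemma weakL: "deriv Rs L C \<Longrightarrow> deriv Rs (P @ L) C"
proof (induction P)
  case (Cons a P)
  then show ?case using weak[of Rs "[]" "P @ L" C a] by simp
qed simp

lemma move_front: "deriv Rs (G @ P @ [x] @ Q) C \<Longrightarrow> deriv Rs (G @ x # P @ Q) C"
proof (induction P arbitrary: G)
  case (Cons y P)
  have "deriv Rs ((G @ [y]) @ P @ [x] @ Q) C" using Cons.prems by simp
  from Cons.IH[OF this] have "deriv Rs (G @ [y, x] @ P @ Q) C" by simp
  hence "deriv Rs (G @ [x, y] @ P @ Q) C" by (rule exch)
  thus ?case by simp
qed simp

lemma move_back: "deriv Rs (G @ x # P @ Q) C \<Longrightarrow> deriv Rs (G @ P @ [x] @ Q) C"
proof (induction P arbitrary: G)
  case (Cons y P)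
  have "deriv Rs (G @ [x, y] @ P @ Q) C" using Cons.prems by simp
  hence "deriv Rs (G @ [y, x] @ P @ Q) C" by (rule exch)
  hence "deriv Rs ((G @ [y]) @ x # P @ Q) C" by simp
  from Cons.IH[OF this] show ?case by simp
qed simp

lemma contract_mem: "x \<in> set L \<Longrightarrow> deriv Rs (x # L) C \<Longrightarrow> deriv Rs L C"
proof -
  assume "x \<in> set L" "deriv Rs (x # L) C"
  then obtain P Q where L: "L = P @ x # Q" by (meson split_list)
  have "deriv Rs ([x] @ P @ [x] @ Q) C" using \<open>deriv Rs (x # L) C\<close> L by simp
  hence "deriv Rs ([x] @ x # P @ Q) C" by (rule move_front)
  hence "deriv Rs ([] @ [x, x] @ P @ Q) C" by simp
  hence "deriv Rs ([] @ [x] @ P @ Q) C" by (rule contr)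
  hence "deriv Rs ([] @ x # P @ Q) C" by simp
  hence "deriv Rs ([] @ P @ [x] @ Q) C" by (rule move_back)
  thus ?thesis using L by simp
qed

lemma absorb: "deriv Rs (L' @ M) C \<Longrightarrow> set M \<subseteq> set L' \<Longrightarrow> deriv Rs L' C"
proof (induction M)
  case (Cons x M)
  have "deriv Rs ([] @ L' @ [x] @ M) C" using Cons.prems by simp
  hence "deriv Rs ([] @ x # L' @ M) C" by (rule move_front)
  hence "deriv Rs (L' @ M) C" using contract_mem[of x "L' @ M"] Cons.prems by auto
  thus ?case using Cons by auto
qed simp

lemma mono: "deriv Rs L C \<Longrightarrow> set L \<subseteq> set L' \<Longrightarrow> deriv Rs L' C"
  using absorb weakL by blast

lemma cut0: "deriv Rs G A \<Longrightarrow> deriv Rs (A # S) B \<Longrightarrow> deriv Rs (G @ S) B"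
  using cut[of Rs G A "[]" S B] by simp

definition dset :: "scheme set \<Rightarrow> 'a fm set \<Rightarrow> 'a fm \<Rightarrow> bool" where
  "dset Rs S C = (\<exists>L. set L \<subseteq> S \<and> deriv Rs L C)"

lemma multicut_aux: "\<forall>x\<in>set L. dset Rs S x \<Longrightarrow> deriv Rs (L @ K) C \<Longrightarrow> set K \<subseteq> S \<Longrightarrow> dset Rs S C"
proof (induction L arbitrary: K)
  case Nil
  then show ?case unfolding dset_def by auto
next
  case (Cons x L)
  obtain Lx where Lx: "set Lx \<subseteq> S" "deriv Rs Lx x" using Cons.prems unfolding dset_def by auto
  have "deriv Rs (Lx @ L @ K) C" using cut0[OF Lx(2)] Cons.prems by simp
  hence "deriv Rs (L @ (K @ Lx)) C" by (rule mono) auto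
  thus ?case using Cons Lx by auto
qed

lemma multicut: "deriv Rs L C \<Longrightarrow> \<forall>x\<in>set L. dset Rs S x \<Longrightarrow> dset Rs S C"
  using multicut_aux[of L Rs S "[]" C] by simp

fun dsj :: "'a fm list \<Rightarrow> 'a fm" where
  "dsj [] = Bot"
| "dsj (x # xs) = Or x (dsj xs)"

fun bigT :: "'a fm list \<Rightarrow> 'a fm" where
  "bigT [] = One"
| "bigT (x # xs) = Tens x (bigT xs)"

lemma botL: "deriv Rs [Bot] C"
  using ax_bot[of Rs "[]" "[]" C] by simp

lemma Lor0: "deriv Rs [A] C \<Longrightarrow> deriv Rs [B] C \<Longrightarrow> deriv Rs [Or A B] C"
  using L_or[of Rs "[]" A "[]" C B] by simp

lemma dsj_mem: "x \<in> set D \<Longrightarrow> deriv Rs [x] (dsj D)"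
  by (induction D) (auto intro: R_or1 R_or2 ax_id)

lemma dsj_sub: "set D1 \<subseteq> set D \<Longrightarrow> deriv Rs [dsj D1] (dsj D)"
  by (induction D1) (auto intro: Lor0 botL dsj_mem)

lemma dsj_single: "set D \<subseteq> {A} \<Longrightarrow> deriv Rs [dsj D] A"
  by (induction D) (auto intro: Lor0 botL ax_id)

lemma elim1: "deriv Rs [Nab (Imp One X)] X"
  using L_imp[of Rs "[]" One "[]" X "[]" X] ax_one ax_id by fastforce

lemma Rimp: "deriv Rs (A # map Nab G) B \<Longrightarrow> deriv Rs G (Imp A B)"
  by (rule R_imp)

lemma nab_or: "deriv Rs [Nab (Or X Y)] (Or (Nab X) (Nab Y))"
proof -
  let ?D = "Or (Nab X) (Nab Y)"
  have "deriv Rs [One, Nab X] ?D"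
    using L_one[of Rs "[]" "[Nab X]" ?D] R_or1 ax_id by fastforce
  hence 1: "deriv Rs [X] (Imp One ?D)" using Rimp[of Rs One "[X]"] by simp
  have "deriv Rs [One, Nab Y] ?D"
    using L_one[of Rs "[]" "[Nab Y]" ?D] R_or2 ax_id by fastforce
  hence 2: "deriv Rs [Y] (Imp One ?D)" using Rimp[of Rs One "[Y]"] by simp
  have "deriv Rs [Nab (Or X Y)] (Nab (Imp One ?D))" using Lor0[OF 1 2] by (rule nab)
  from cut0[OF this elim1[of Rs ?D, unfolded]] show ?thesis by simp
qed

lemma cut1: "deriv Rs [A] B \<Longrightarrow> deriv Rs [B] C \<Longrightarrow> deriv Rs [A] C"
  using cut0[of Rs "[A]" B "[]" C] by simp

lemma nab_bot: "deriv Rs [Nab Bot] Bot"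
proof -
  have "deriv Rs [Nab Bot] (Nab (Imp One Bot))" by (rule nab) (rule botL)
  thus ?thesis using cut1 elim1 by blast
qed

lemma nab_dsj: "deriv Rs [Nab (dsj D)] (dsj (map Nab D))"
proof (induction D)
  case Nil
  then show ?case using nab_bot by simp
next
  case (Cons x D)
  have "deriv Rs [Or (Nab x) (Nab (dsj D))] (dsj (map Nab (x # D)))"
    using Lor0[OF R_or1[OF ax_id] R_or2[OF Cons]] by simp
  then show ?case using cut1 nab_or by fastforce
qed

lemma bigT_R: "deriv Rs Cs (bigT Cs)"
proof (induction Cs)
  case Nil then show ?case by (simp add: ax_one)
next
  case (Cons x Cs)
  then show ?case using R_tens[OF ax_id[of Rs x] Cons] by simp
qed

lemma bigT_L_aux: "deriv Rs (G @ L) C \<Longrightarrow> deriv Rs (G @ [bigT L]) C"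
proof (induction L arbitrary: G)
  case Nil
  then show ?case using L_one[of Rs G "[]" C] by simp
next
  case (Cons x L)
  have "deriv Rs ((G @ [x]) @ [bigT L]) C" using Cons.IH[of "G @ [x]"] Cons.prems by simp
  hence "deriv Rs (G @ [x, bigT L] @ []) C" by simp
  hence "deriv Rs (G @ [Tens x (bigT L)] @ []) C" by (rule L_tens)
  then show ?case by simp
qed

lemma bigT_L: "deriv Rs L C \<Longrightarrow> deriv Rs [bigT L] C"
  using bigT_L_aux[of Rs "[]" L C] by simp

lemma nab_bigT: "deriv Rs [Nab (bigT Cs)] (bigT (map Nab Cs))"
proof (induction Cs)
  case Nil then show ?case by (simp add: ax_nab_one)
next
  case (Cons x Cs)
  have "deriv Rs [Nab x, Nab (bigT Cs)] (Tens (Nab x) (bigT (map Nab Cs)))"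
    using R_tens[OF ax_id[of Rs "Nab x"] Cons] by simp
  then show ?case by (simp add: oplax)
qed

lemma imp_cov: "deriv Rs [B] B' \<Longrightarrow> deriv Rs [Imp A B] (Imp A B')"
proof -
  assume "deriv Rs [B] B'"
  hence "deriv Rs ([] @ [B] @ []) B'" by simp
  hence "deriv Rs ([] @ [A] @ [Nab (Imp A B)] @ []) B'"
    using L_imp[of Rs "[A]" A "[]" B "[]" B'] ax_id by blast
  thus ?thesis using Rimp[of Rs A "[Imp A B]" B'] by simp
qed

lemma mp: "deriv Rs [A, Nab (Imp A B)] B"
  using L_imp[of Rs "[A]" A "[]" B "[]" B] ax_id by fastforce

lemma nrule: "SN \<in> Rs \<or> SH \<in> Rs \<Longrightarrow> deriv Rs G C \<Longrightarrow> deriv Rs (map Nab G) (Nab C)"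
  using sch_N[of Rs G C] sch_H[of Rs G "[]" C] by auto

lemma h_up: "SH \<in> Rs \<Longrightarrow> deriv Rs [A] (Nab (Imp One A))"
proof -
  assume H: "SH \<in> Rs"
  have "deriv Rs [Nab One, Nab A] (Nab A)" by (rule mono[OF ax_id]) auto
  hence 1: "deriv Rs [A] (Imp (Nab One) (Nab A))" using Rimp[of Rs "Nab One" "[A]"] by simp
  have "deriv Rs ([] @ map (\<lambda>(a, b). Imp a b) [(One, A)]) (Imp One A)" by (simp add: ax_id)
  from sch_H[OF H this] have "deriv Rs [Imp (Nab One) (Nab A)] (Nab (Imp One A))" by simp
  thus ?thesis using cut1 1 by blast
qed

lemma h_down: "SH \<in> Rs \<Longrightarrow> deriv Rs [Imp One (Nab B)] B"
proof -
  assume H: "SH \<in> Rs"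
  have "deriv Rs ([] @ [Nab B] @ []) (Nab B)" using ax_id by simp
  hence "deriv Rs ([] @ [Nab One] @ [Nab (Imp One (Nab B))] @ []) (Nab B)"
    using L_imp[of Rs "[Nab One]" One "[]" "Nab B" "[]" "Nab B"] ax_id ax_nab_one by blast
  hence 1: "deriv Rs [Imp One (Nab B)] (Imp (Nab One) (Nab B))"
    using Rimp[of Rs "Nab One" "[Imp One (Nab B)]"] by simp
  have "deriv Rs ([] @ map (\<lambda>(a, b). Imp a b) [(One, B)]) (Imp One B)" by (simp add: ax_id)
  from sch_H[OF H this] have "deriv Rs [Imp (Nab One) (Nab B)] (Nab (Imp One B))" by simp
  thus ?thesis using cut1 1 elim1 by blast
qed


definition th :: "scheme set \<Rightarrow> 'a fm set \<Rightarrow> bool" where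
  "th Rs S = (\<forall>C. dset Rs S C \<longrightarrow> C \<in> S)"

definition pth :: "scheme set \<Rightarrow> 'a fm set \<Rightarrow> bool" where
  "pth Rs S = (th Rs S \<and> Bot \<notin> S \<and> (\<forall>A B. Or A B \<in> S \<longrightarrow> A \<in> S \<or> B \<in> S))"

definition cons :: "scheme set \<Rightarrow> 'a fm set \<Rightarrow> 'a fm set \<Rightarrow> bool" where
  "cons Rs G D = (\<not> (\<exists>L Ds. set L \<subseteq> G \<and> set Ds \<subseteq> D \<and> deriv Rs L (dsj Ds)))"

lemma consE: "cons Rs G D \<Longrightarrow> set L \<subseteq> G \<Longrightarrow> set Ds \<subseteq> D \<Longrightarrow> deriv Rs L (dsj Ds) \<Longrightarrow> False"
  unfolding cons_def by blast

lemma thI: "th Rs S \<Longrightarrow> set L \<subseteq> S \<Longrightarrow> deriv Rs L C \<Longrightarrow> C \<in> S"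
  unfolding th_def dset_def by blast

lemma pull: "set L \<subseteq> insert C M \<Longrightarrow> deriv Rs L X \<Longrightarrow>
   deriv Rs (C # filter (\<lambda>x. x \<noteq> C) L) X \<and> set (filter (\<lambda>x. x \<noteq> C) L) \<subseteq> M"
proof
  assume a: "set L \<subseteq> insert C M" "deriv Rs L X"
  show "deriv Rs (C # filter (\<lambda>x. x \<noteq> C) L) X" by (rule mono[OF a(2)]) (use a(1) in auto)
  show "set (filter (\<lambda>x. x \<noteq> C) L) \<subseteq> M" using a(1) by auto
qed

lemma lindenbaum:
  assumes "cons Rs G D"
  shows "\<exists>M. G \<subseteq> M \<and> pth Rs M \<and> M \<inter> D = {}"
proof -
  let ?A = "{M. G \<subseteq> M \<and> cons Rs M D}"
  have ne: "?A \<noteq> {}" using assms by auto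
  have "\<exists>M\<in>?A. \<forall>X\<in>?A. M \<subseteq> X \<longrightarrow> X = M"
  proof (rule subset_Zorn_nonempty[OF ne])
    fix \<C> assume C: "\<C> \<noteq> {}" "subset.chain ?A \<C>"
    have "G \<subseteq> \<Union>\<C>" using C unfolding subset.chain_def by blast
    moreover have "cons Rs (\<Union>\<C>) D"
      unfolding cons_def
    proof
      assume "\<exists>L Ds. set L \<subseteq> \<Union>\<C> \<and> set Ds \<subseteq> D \<and> deriv Rs L (dsj Ds)"
      then obtain L Ds where L: "set L \<subseteq> \<Union>\<C>" "set Ds \<subseteq> D" "deriv Rs L (dsj Ds)" by blast
      obtain B where "B \<in> \<C>" "set L \<subseteq> B"
        using finite_subset_Union_chain[OF _ L(1) C(1) C(2)] by blast
      hence "cons Rs B D" using C unfolding subset.chain_def by blast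
      thus False using consE L \<open>set L \<subseteq> B\<close> by blast
    qed
    ultimately show "\<Union>\<C> \<in> ?A" by blast
  qed
  then obtain M where M0: "M \<in> ?A" and mx0: "\<forall>X\<in>?A. M \<subseteq> X \<longrightarrow> X = M"
    by (rule bexE)
  have M: "G \<subseteq> M" "cons Rs M D" using M0 by auto
  have mx: "X = M" if "X \<in> ?A" "M \<subseteq> X" for X using mx0 that by blast
  have ins: "\<exists>L Ds. set L \<subseteq> M \<and> set Ds \<subseteq> D \<and> deriv Rs (C # L) (dsj Ds)" if "C \<notin> M" for C
  proof -
    have "insert C M \<notin> ?A" using mx[of "insert C M"] that by blast
    hence "\<not> cons Rs (insert C M) D" using M by auto
    then obtain L Ds where "set L \<subseteq> insert C M" "set Ds \<subseteq> D" "deriv Rs L (dsj Ds)"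
      unfolding cons_def by blast
    thus ?thesis using pull by blast
  qed
  have "th Rs M" unfolding th_def
  proof (intro allI impI)
    fix C assume "dset Rs M C"
    then obtain L0 where L0: "set L0 \<subseteq> M" "deriv Rs L0 C" unfolding dset_def by blast
    show "C \<in> M"
    proof (rule ccontr)
      assume "C \<notin> M"
      then obtain L Ds where "set L \<subseteq> M" "set Ds \<subseteq> D" "deriv Rs (C # L) (dsj Ds)" using ins by blast
      hence "deriv Rs (L0 @ L) (dsj Ds)" using cut0 L0 by blast
      thus False using consE[OF M(2), of "L0 @ L" Ds] L0 \<open>set L \<subseteq> M\<close> \<open>set Ds \<subseteq> D\<close> by simp
    qed
  qed
  moreover have "Bot \<notin> M"
  proof
    assume "Bot \<in> M"
    thus False using consE[OF M(2), of "[Bot]" "[]"] by (simp add: botL)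
  qed
  moreover have "A \<in> M \<or> B \<in> M" if "Or A B \<in> M" for A B
  proof (rule ccontr)
    assume "\<not> (A \<in> M \<or> B \<in> M)"
    hence "A \<notin> M" "B \<notin> M" by auto
    obtain L1 D1 where 1: "set L1 \<subseteq> M" "set D1 \<subseteq> D" "deriv Rs (A # L1) (dsj D1)"
      using ins[OF \<open>A \<notin> M\<close>] by blast
    obtain L2 D2 where 2: "set L2 \<subseteq> M" "set D2 \<subseteq> D" "deriv Rs (B # L2) (dsj D2)"
      using ins[OF \<open>B \<notin> M\<close>] by blast
    have a: "deriv Rs (A # L1 @ L2) (dsj (D1 @ D2))"
      using cut0[OF mono[OF 1(3)] dsj_sub[of D1 "D1 @ D2" Rs]] by (simp add: subset_iff)
    have b: "deriv Rs (B # L1 @ L2) (dsj (D1 @ D2))"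
      using cut0[OF mono[OF 2(3)] dsj_sub[of D2 "D1 @ D2" Rs]] by (simp add: subset_iff)
    have "deriv Rs ([] @ [Or A B] @ L1 @ L2) (dsj (D1 @ D2))"
      using L_or[of Rs "[]" A "L1 @ L2" _ B] a b by simp
    moreover have "set (Or A B # L1 @ L2) \<subseteq> M" using 1 2 that by auto
    ultimately show False using consE[OF M(2), of "Or A B # L1 @ L2" "D1 @ D2"] 1 2 by simp
  qed
  moreover have "M \<inter> D = {}"
  proof (rule ccontr)
    assume "M \<inter> D \<noteq> {}"
    then obtain x where "x \<in> M" "x \<in> D" by blast
    thus False using consE[OF M(2), of "[x]" "[x]"] by (simp add: R_or1 ax_id)
  qed
  ultimately show ?thesis using M unfolding pth_def by blast
qed


definition Wc :: "scheme set \<Rightarrow> 'a fm set set set" where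
  "Wc Rs = {{S} | S. pth Rs S}"

definition lec :: "'a fm set set \<Rightarrow> 'a fm set set \<Rightarrow> bool" where
  "lec X Y = (\<Union>X \<subseteq> \<Union>Y)"

definition Rc :: "'a fm set set \<Rightarrow> 'a fm set set \<Rightarrow> bool" where
  "Rc X Y = (\<forall>A\<in>\<Union>X. Nab A \<in> \<Union>Y)"

definition Vc :: "scheme set \<Rightarrow> 'a \<Rightarrow> 'a fm set set set" where
  "Vc Rs p = {X \<in> Wc Rs. Var p \<in> \<Union>X}"

lemma Wc_iff: "X \<in> Wc Rs \<longleftrightarrow> (\<exists>S. X = {S} \<and> pth Rs S)"
  unfolding Wc_def by blast

lemma ball_Wc: "(\<forall>v\<in>Wc Rs. P v) \<longleftrightarrow> (\<forall>S. pth Rs S \<longrightarrow> P {S})"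
  unfolding Wc_def by blast

lemma bex_Wc: "(\<exists>v\<in>Wc Rs. P v) \<longleftrightarrow> (\<exists>S. pth Rs S \<and> P {S})"
  unfolding Wc_def by blast

lemma th1: "th Rs S \<Longrightarrow> A \<in> S \<Longrightarrow> deriv Rs [A] C \<Longrightarrow> C \<in> S"
  by (rule thI[of Rs S "[A]"]) auto

lemma th2: "th Rs S \<Longrightarrow> A \<in> S \<Longrightarrow> B \<in> S \<Longrightarrow> deriv Rs [A, B] C \<Longrightarrow> C \<in> S"
  by (rule thI[of Rs S "[A, B]"]) auto

lemma th0: "th Rs S \<Longrightarrow> deriv Rs [] C \<Longrightarrow> C \<in> S"
  by (rule thI[of Rs S "[]"]) auto

lemma img_list: "set L \<subseteq> insert A (f ` S) \<Longrightarrow> \<exists>Cs. set Cs \<subseteq> S \<and> set L \<subseteq> set (A # map f Cs)"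
proof (induction L)
  case Nil then show ?case by (intro exI[of _ "[]"]) simp
next
  case (Cons x L)
  then obtain Cs where Cs: "set Cs \<subseteq> S" "set L \<subseteq> set (A # map f Cs)" by auto
  show ?case
  proof (cases "x = A")
    case True then show ?thesis using Cs by auto
  next
    case False
    then obtain c where "c \<in> S" "x = f c" using Cons.prems by auto
    then show ?thesis using Cs by (intro exI[of _ "c # Cs"]) auto
  qed
qed

lemma img_list2: "set L \<subseteq> f ` S \<Longrightarrow> \<exists>Cs. set Cs \<subseteq> S \<and> L = map f Cs"
proof (induction L)
  case Nil then show ?case by (intro exI[of _ "[]"]) simp
next
  case (Cons x L)
  then obtain Cs where Cs: "set Cs \<subseteq> S" "L = map f Cs" by auto
  obtain c where "c \<in> S" "x = f c" using Cons.prems by auto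
  then show ?case using Cs by (intro exI[of _ "c # Cs"]) auto
qed

lemma prime_dsj: "pth Rs S \<Longrightarrow> dsj D \<in> S \<Longrightarrow> \<exists>x\<in>set D. x \<in> S"
  by (induction D) (auto simp: pth_def)

lemma tensL1: "deriv Rs [Tens A B] A"
proof -
  have "deriv Rs ([] @ [A, B] @ []) A" by (rule mono[OF ax_id]) auto
  from L_tens[OF this] show ?thesis by simp
qed

lemma tensL2: "deriv Rs [Tens A B] B"
proof -
  have "deriv Rs ([] @ [A, B] @ []) B" by (rule mono[OF ax_id]) auto
  from L_tens[OF this] show ?thesis by simp
qed

lemma andL1: "deriv Rs [And A B] A"
  using L_and1[of Rs "[]" A "[]" A B] ax_id by fastforce
lemma andL2: "deriv Rs [And A B] B"
  using L_and2[of Rs "[]" B "[]" B A] ax_id by fastforce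
lemma andR: "deriv Rs [A, B] (And A B)"
  by (rule R_and; rule mono[OF ax_id]; auto)
lemma tensR: "deriv Rs [A, B] (Tens A B)"
  using R_tens[OF ax_id[of Rs A] ax_id[of Rs B]] by simp

lemma imp_witness:
  assumes S: "pth Rs S" and n: "Imp A B \<notin> S"
  shows "\<exists>T. pth Rs T \<and> Nab ` S \<subseteq> T \<and> A \<in> T \<and> B \<notin> T"
proof -
  have "cons Rs (insert A (Nab ` S)) {B}" unfolding cons_def
  proof
    assume "\<exists>L Ds. set L \<subseteq> insert A (Nab ` S) \<and> set Ds \<subseteq> {B} \<and> deriv Rs L (dsj Ds)"
    then obtain L Ds where L: "set L \<subseteq> insert A (Nab ` S)" "set Ds \<subseteq> {B}" "deriv Rs L (dsj Ds)" by blast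
    obtain Cs where Cs: "set Cs \<subseteq> S" "set L \<subseteq> set (A # map Nab Cs)" using img_list[OF L(1)] by blast
    have "deriv Rs (L @ []) B" using cut0[OF L(3)] dsj_single[OF L(2)] by blast
    hence "deriv Rs (A # map Nab Cs) B" by (rule mono) (use Cs in auto)
    hence "deriv Rs Cs (Imp A B)" by (rule Rimp)
    hence "Imp A B \<in> S" using thI S Cs unfolding pth_def by blast
    thus False using n by blast
  qed
  from lindenbaum[OF this] obtain T where T: "insert A (Nab ` S) \<subseteq> T" "pth Rs T" "T \<inter> {B} = {}"
    by blast
  hence "Nab ` S \<subseteq> T \<and> A \<in> T \<and> B \<notin> T" by auto
  thus ?thesis using T(2) by blast
qed

lemma nab_witness:
  assumes S: "pth Rs S" and n: "Nab A \<in> S"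
  shows "\<exists>T. pth Rs T \<and> A \<in> T \<and> (\<forall>B\<in>T. Nab B \<in> S)"
proof -
  have "cons Rs {A} {B. Nab B \<notin> S}" unfolding cons_def
  proof
    assume "\<exists>L Ds. set L \<subseteq> {A} \<and> set Ds \<subseteq> {B. Nab B \<notin> S} \<and> deriv Rs L (dsj Ds)"
    then obtain L Ds where L: "set L \<subseteq> {A}" "set Ds \<subseteq> {B. Nab B \<notin> S}" "deriv Rs L (dsj Ds)" by blast
    have "deriv Rs [A] (dsj Ds)" by (rule mono[OF L(3)]) (use L(1) in auto)
    hence "deriv Rs [Nab A] (Nab (dsj Ds))" by (rule nab)
    hence "deriv Rs [Nab A] (dsj (map Nab Ds))" using cut1 nab_dsj by blast
    hence "dsj (map Nab Ds) \<in> S" using th1 S n unfolding pth_def by blast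
    then obtain x where "x \<in> set (map Nab Ds)" "x \<in> S" using prime_dsj[OF S] by blast
    thus False using L(2) by auto
  qed
  from lindenbaum[OF this] obtain T where T: "{A} \<subseteq> T" "pth Rs T" "T \<inter> {B. Nab B \<notin> S} = {}"
    by blast
  hence "A \<in> T \<and> (\<forall>B\<in>T. Nab B \<in> S)" by auto
  thus ?thesis using T(2) by blast
qed

lemma and_mem: "pth Rs S \<Longrightarrow> And A B \<in> S \<longleftrightarrow> A \<in> S \<and> B \<in> S"
  unfolding pth_def using th1[of Rs S _ A, OF _ _ andL1] th1[of Rs S _ B, OF _ _ andL2]
    th2[of Rs S A B, OF _ _ _ andR] by blast

lemma tens_mem: "pth Rs S \<Longrightarrow> Tens A B \<in> S \<longleftrightarrow> A \<in> S \<and> B \<in> S"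
  unfolding pth_def using th1[of Rs S _ A, OF _ _ tensL1] th1[of Rs S _ B, OF _ _ tensL2]
    th2[of Rs S A B, OF _ _ _ tensR] by blast

lemma or_mem: "pth Rs S \<Longrightarrow> Or A B \<in> S \<longleftrightarrow> A \<in> S \<or> B \<in> S"
  unfolding pth_def using th1[of Rs S A "Or A B", OF _ _ R_or1[OF ax_id]]
    th1[of Rs S B "Or A B", OF _ _ R_or2[OF ax_id]] by blast


lemma Wc_single: "pth Rs S \<Longrightarrow> {S} \<in> Wc Rs"
  unfolding Wc_def by blast

lemma Wc_E: "u \<in> Wc Rs \<Longrightarrow> (\<And>S. u = {S} \<Longrightarrow> pth Rs S \<Longrightarrow> P) \<Longrightarrow> P"
  unfolding Wc_def by blast

lemma truth:
  "pth Rs S \<Longrightarrow> forces (Wc Rs) lec Rc (Vc Rs) {S} A \<longleftrightarrow> A \<in> S"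
proof (induction A arbitrary: S)
  case (Var x)
  then show ?case by (auto simp: Vc_def Wc_iff)
next
  case One
  then show ?case using th0[OF _ ax_one] by (auto simp: pth_def)
next
  case Top
  then show ?case using th0[OF _ ax_top] by (auto simp: pth_def)
next
  case Bot
  then show ?case by (auto simp: pth_def)
next
  case (And A1 A2)
  then show ?case using and_mem[OF And.prems] by simp
next
  case (Or A1 A2)
  then show ?case using or_mem[OF Or.prems] by simp
next
  case (Tens A1 A2)
  then show ?case using tens_mem[OF Tens.prems] by simp
next
  case (Imp A1 A2)
  show ?case
  proof
    assume f: "forces (Wc Rs) lec Rc (Vc Rs) {S} (Imp A1 A2)"
    show "Imp A1 A2 \<in> S"
    proof (rule ccontr)
      assume "Imp A1 A2 \<notin> S"
      from imp_witness[OF Imp.prems this] obtain T where T: "pth Rs T" "Nab ` S \<subseteq> T" "A1 \<in> T" "A2 \<notin> T"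
        by (elim exE conjE)
      have "Rc {S} {T}" using T(2) unfolding Rc_def by auto
      have "{T} \<in> Wc Rs" using Wc_single[OF T(1)] .
      have "forces (Wc Rs) lec Rc (Vc Rs) {T} A1" using T(3) Imp.IH(1)[OF T(1)] by simp
      hence "forces (Wc Rs) lec Rc (Vc Rs) {T} A2" using f \<open>Rc {S} {T}\<close> \<open>{T} \<in> Wc Rs\<close> by simp
      thus False using T(4) Imp.IH(2)[OF T(1)] by simp
    qed
  next
    assume i: "Imp A1 A2 \<in> S"
    show "forces (Wc Rs) lec Rc (Vc Rs) {S} (Imp A1 A2)"
      unfolding forces.simps ball_Wc
    proof (intro allI impI)
      fix T assume T: "pth Rs T" "Rc {S} {T}" "forces (Wc Rs) lec Rc (Vc Rs) {T} A1"
      have "Nab (Imp A1 A2) \<in> T" using T(2) i unfolding Rc_def by auto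
      moreover have "A1 \<in> T" using T(3) Imp.IH(1)[OF T(1)] by simp
      moreover have "th Rs T" using T(1) unfolding pth_def by blast
      ultimately have "A2 \<in> T" using th2[OF _ _ _ mp] by blast
      thus "forces (Wc Rs) lec Rc (Vc Rs) {T} A2" using Imp.IH(2)[OF T(1)] by simp
    qed
  qed
next
  case (Nab A)
  show ?case
  proof
    assume "forces (Wc Rs) lec Rc (Vc Rs) {S} (Nab A)"
    then obtain T where T: "pth Rs T" "Rc {T} {S}" "forces (Wc Rs) lec Rc (Vc Rs) {T} A"
      by (auto simp: bex_Wc)
    have "A \<in> T" using T(3) Nab.IH[OF T(1)] by simp
    thus "Nab A \<in> S" using T(2) unfolding Rc_def by auto
  next
    assume "Nab A \<in> S"
    from nab_witness[OF Nab.prems this] obtain T where T: "pth Rs T" "A \<in> T" "\<forall>B\<in>T. Nab B \<in> S"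
      by (elim exE conjE)
    have "Rc {T} {S}" using T(3) unfolding Rc_def by auto
    moreover have "forces (Wc Rs) lec Rc (Vc Rs) {T} A" using T(2) Nab.IH[OF T(1)] by simp
    moreover have "{T} \<in> Wc Rs" using Wc_single[OF T(1)] .
    ultimately show "forces (Wc Rs) lec Rc (Vc Rs) {S} (Nab A)" by auto
  qed
qed


lemma kripke_c: "kripke_model (Wc Rs) lec Rc (Vc Rs)"
  unfolding kripke_model_def ball_Wc lec_def Rc_def Vc_def by (auto simp: Wc_iff)

definition pic :: "'a fm set set \<Rightarrow> 'a fm set set" where
  "pic X = {{B. Nab B \<in> \<Union>X}}"

lemma pi_pth: "SN \<in> Rs \<or> SH \<in> Rs \<Longrightarrow> pth Rs S \<Longrightarrow> pth Rs {B. Nab B \<in> S}"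
proof -
  assume N: "SN \<in> Rs \<or> SH \<in> Rs" and S: "pth Rs S"
  have thS: "th Rs S" using S unfolding pth_def by blast
  have "th Rs {B. Nab B \<in> S}" unfolding th_def
  proof (intro allI impI)
    fix C assume "dset Rs {B. Nab B \<in> S} C"
    then obtain L where L: "set L \<subseteq> {B. Nab B \<in> S}" "deriv Rs L C" unfolding dset_def by blast
    have "deriv Rs (map Nab L) (Nab C)" using nrule[OF N L(2)] .
    moreover have "set (map Nab L) \<subseteq> S" using L(1) by auto
    ultimately show "C \<in> {B. Nab B \<in> S}" using thI[OF thS] by blast
  qed
  moreover have "Bot \<notin> {B. Nab B \<in> S}"
    using th1[OF thS _ nab_bot] S unfolding pth_def by blast
  moreover have "A \<in> {B. Nab B \<in> S} \<or> B \<in> {B. Nab B \<in> S}" if "Or A B \<in> {B. Nab B \<in> S}" for A B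
  proof -
    have "Or (Nab A) (Nab B) \<in> S" using th1[OF thS _ nab_or] that by blast
    thus ?thesis using S unfolding pth_def by blast
  qed
  ultimately show ?thesis unfolding pth_def by blast
qed

lemma has_pi_c: "SN \<in> Rs \<or> SH \<in> Rs \<Longrightarrow> has_pi (Wc Rs) lec Rc pic"
  unfolding has_pi_def
proof (intro conjI ballI impI)
  fix u assume N: "SN \<in> Rs \<or> SH \<in> Rs" and u: "u \<in> Wc Rs"
  obtain S where S: "u = {S}" "pth Rs S" using u by (rule Wc_E)
  have "pic u = {{B. Nab B \<in> S}}" unfolding pic_def S(1) by simp
  thus "pic u \<in> Wc Rs" using Wc_single[OF pi_pth[OF N S(2)]] by simp
next
  fix u v assume "lec u v" thus "lec (pic u) (pic v)" unfolding lec_def pic_def by auto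
next
  fix u v show "Rc u v = lec u (pic v)" unfolding Rc_def lec_def pic_def by auto
qed

lemma h_reflect: "SH \<in> Rs \<Longrightarrow> pth Rs u \<Longrightarrow> pth Rs v \<Longrightarrow> {B. Nab B \<in> u} \<subseteq> {B. Nab B \<in> v} \<Longrightarrow> u \<subseteq> v"
proof
  fix A assume H: "SH \<in> Rs" and u: "pth Rs u" and v: "pth Rs v" and sub: "{B. Nab B \<in> u} \<subseteq> {B. Nab B \<in> v}"
    and A: "A \<in> u"
  have "Nab (Imp One A) \<in> u" using th1[OF _ A h_up[OF H]] u unfolding pth_def by blast
  hence "Nab (Imp One A) \<in> v" using sub by blast
  thus "A \<in> v" using th1[OF _ _ elim1] v unfolding pth_def by blast
qed

lemma up_imp: "deriv Rs [B] (Imp One (Nab B))"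
proof -
  have "deriv Rs [One, Nab B] (Nab B)" by (rule mono[OF ax_id]) auto
  thus ?thesis using Rimp[of Rs One "[B]"] by simp
qed

lemma h_surj: "SH \<in> Rs \<Longrightarrow> pth Rs F \<Longrightarrow> \<exists>P. pth Rs P \<and> {B. Nab B \<in> P} = F"
proof -
  assume H: "SH \<in> Rs" and F: "pth Rs F"
  have thF: "th Rs F" using F unfolding pth_def by blast
  let ?P = "{A. Imp One A \<in> F}"
  have "th Rs ?P" unfolding th_def
  proof (intro allI impI)
    fix C assume "dset Rs ?P C"
    then obtain L where L: "set L \<subseteq> ?P" "deriv Rs L C" unfolding dset_def by blast
    let ?K = "One # map Nab (map (Imp One) L)"
    have "\<forall>x\<in>set L. dset Rs (set ?K) x"
    proof
      fix x assume "x \<in> set L"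
      thus "dset Rs (set ?K) x" unfolding dset_def
        by (intro exI[of _ "[Nab (Imp One x)]"]) (auto simp: elim1)
    qed
    from multicut[OF L(2) this] obtain L' where "set L' \<subseteq> set ?K" "deriv Rs L' C"
      unfolding dset_def by blast
    hence "deriv Rs ?K C" using mono by blast
    hence "deriv Rs (map (Imp One) L) (Imp One C)" by (rule Rimp)
    moreover have "set (map (Imp One) L) \<subseteq> F" using L(1) by auto
    ultimately show "C \<in> ?P" using thI[OF thF] by blast
  qed
  moreover have "Bot \<notin> ?P"
  proof
    assume "Bot \<in> ?P"
    hence "Imp One (Nab Bot) \<in> F" using th1[OF thF _ imp_cov[OF botL]] by blast
    hence "Bot \<in> F" using th1[OF thF _ h_down[OF H]] by blast
    thus False using F unfolding pth_def by blast
  qed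
  moreover have "A \<in> ?P \<or> B \<in> ?P" if "Or A B \<in> ?P" for A B
  proof -
    let ?D = "Or (Imp One A) (Imp One B)"
    have a: "deriv Rs [A] (Nab ?D)" using cut1[OF h_up[OF H] nab[OF R_or1[OF ax_id]]] by blast
    have b: "deriv Rs [B] (Nab ?D)" using cut1[OF h_up[OF H] nab[OF R_or2[OF ax_id]]] by blast
    have "deriv Rs [Imp One (Or A B)] ?D"
      using cut1[OF imp_cov[OF Lor0[OF a b]] h_down[OF H]] .
    hence "?D \<in> F" using th1[OF thF] that by blast
    thus ?thesis using F unfolding pth_def by blast
  qed
  ultimately have P: "pth Rs ?P" unfolding pth_def by blast
  have "{B. Nab B \<in> ?P} = F"
  proof (intro set_eqI iffI)
    fix B assume "B \<in> {B. Nab B \<in> ?P}"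
    thus "B \<in> F" using th1[OF thF _ h_down[OF H]] by blast
  next
    fix B assume "B \<in> F"
    thus "B \<in> {B. Nab B \<in> ?P}" using th1[OF thF _ up_imp] by blast
  qed
  thus ?thesis using P by blast
qed

lemma ordc: "SH \<in> Rs \<Longrightarrow> u \<in> Wc Rs \<Longrightarrow> v \<in> Wc Rs \<Longrightarrow> lec u v \<longleftrightarrow> lec (pic u) (pic v)"
proof -
  assume H: "SH \<in> Rs" and uv: "u \<in> Wc Rs" "v \<in> Wc Rs"
  obtain S where S: "u = {S}" "pth Rs S" using uv(1) by (rule Wc_E)
  obtain T where T: "v = {T}" "pth Rs T" using uv(2) by (rule Wc_E)
  have "S \<subseteq> T \<longleftrightarrow> {B. Nab B \<in> S} \<subseteq> {B. Nab B \<in> T}"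
  proof
    assume "S \<subseteq> T" thus "{B. Nab B \<in> S} \<subseteq> {B. Nab B \<in> T}" by blast
  next
    assume "{B. Nab B \<in> S} \<subseteq> {B. Nab B \<in> T}"
    thus "S \<subseteq> T" by (rule h_reflect[OF H S(2) T(2)])
  qed
  thus ?thesis unfolding lec_def pic_def S T ccpo_Sup_singleton .
qed

lemma K_c: "K_model Rs (Wc Rs) lec Rc (Vc Rs)"
  unfolding K_model_def
proof (intro conjI impI)
  show "kripke_model (Wc Rs) lec Rc (Vc Rs)" by (rule kripke_c)
next
  assume "SN \<in> Rs" thus "\<exists>\<pi>. has_pi (Wc Rs) lec Rc \<pi>" using has_pi_c by blast
next
  assume H: "SH \<in> Rs"
  have hp: "has_pi (Wc Rs) lec Rc pic" using has_pi_c H by blast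
  have ord: "lec u v \<longleftrightarrow> lec (pic u) (pic v)" if "u \<in> Wc Rs" "v \<in> Wc Rs" for u v
    by (rule ordc[OF H that])
  have inj: "inj_on pic (Wc Rs)"
  proof (rule inj_onI)
    fix u v assume uv: "u \<in> Wc Rs" "v \<in> Wc Rs" "pic u = pic v"
    have "lec u v" using ord[OF uv(1,2)] uv(3) unfolding lec_def by simp
    moreover have "lec v u" using ord[OF uv(2,1)] uv(3) unfolding lec_def by simp
    moreover obtain S where "u = {S}" "pth Rs S" using uv(1) by (rule Wc_E)
    moreover obtain T where "v = {T}" "pth Rs T" using uv(2) by (rule Wc_E)
    ultimately show "u = v" unfolding lec_def by simp
  qed
  have "pic ` Wc Rs = Wc Rs"
  proof
    show "pic ` Wc Rs \<subseteq> Wc Rs" using hp unfolding has_pi_def by blast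
  next
    show "Wc Rs \<subseteq> pic ` Wc Rs"
    proof
      fix x assume "x \<in> Wc Rs"
      then obtain F where F: "x = {F}" "pth Rs F" by (rule Wc_E)
      obtain P where P: "pth Rs P" "{B. Nab B \<in> P} = F" using h_surj[OF H F(2)] by blast
      have "{P} \<in> Wc Rs" using Wc_single[OF P(1)] .
      moreover have "pic {P} = x" using P(2) F(1) unfolding pic_def by simp
      ultimately show "x \<in> pic ` Wc Rs" by (metis imageI)
    qed
  qed
  hence "bij_betw pic (Wc Rs) (Wc Rs)" using inj unfolding bij_betw_def by blast
  thus "\<exists>\<pi>. has_pi (Wc Rs) lec Rc \<pi> \<and> bij_betw \<pi> (Wc Rs) (Wc Rs) \<and>
          (\<forall>u\<in>Wc Rs. \<forall>v\<in>Wc Rs. lec u v = lec (\<pi> u) (\<pi> v))"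
    using hp ord by blast
next
  assume P: "SP \<in> Rs"
  show "\<forall>u\<in>Wc Rs. \<forall>v\<in>Wc Rs. Rc u v \<longrightarrow> lec u v"
  proof (intro ballI impI)
    fix u v assume uv: "u \<in> Wc Rs" "v \<in> Wc Rs" "Rc u v"
    obtain T where T: "v = {T}" "pth Rs T" using uv(2) by (rule Wc_E)
    have "A \<in> \<Union>v" if "A \<in> \<Union>u" for A
    proof -
      have "Nab A \<in> T" using uv(3) that T unfolding Rc_def by auto
      thus ?thesis using th1[OF _ _ sch_P[OF P ax_id]] T unfolding pth_def by auto
    qed
    thus "lec u v" unfolding lec_def by blast
  qed
next
  assume F: "SF \<in> Rs"
  show "\<forall>u\<in>Wc Rs. Rc u u"
  proof
    fix u assume "u \<in> Wc Rs"
    then obtain S where S: "u = {S}" "pth Rs S" by (rule Wc_E)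
    have "Nab A \<in> S" if "A \<in> S" for A
      using th1[OF _ that sch_F[OF F ax_id]] S(2) unfolding pth_def by blast
    thus "Rc u u" using S unfolding Rc_def by auto
  qed
next
  assume wF: "SwF \<in> Rs"
  show "\<forall>u\<in>Wc Rs. \<exists>v\<in>Wc Rs. Rc u v"
  proof
    fix u assume "u \<in> Wc Rs"
    then obtain S where S: "u = {S}" "pth Rs S" by (rule Wc_E)
    have thS: "th Rs S" using S(2) unfolding pth_def by blast
    have "cons Rs (Nab ` S) {}" unfolding cons_def
    proof
      assume "\<exists>L Ds. set L \<subseteq> Nab ` S \<and> set Ds \<subseteq> {} \<and> deriv Rs L (dsj Ds)"
      then obtain L Ds where L: "set L \<subseteq> Nab ` S" "set Ds \<subseteq> {}" "deriv Rs L (dsj Ds)" by blast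
      obtain Cs where Cs: "set Cs \<subseteq> S" "L = map Nab Cs" using img_list2[OF L(1)] by blast
      have "deriv Rs (map Nab Cs) Bot" using L(2,3) Cs(2) by simp
      hence "deriv Rs [bigT (map Nab Cs)] Bot" by (rule bigT_L)
      hence "deriv Rs [Nab (bigT Cs)] Bot" using cut1[OF nab_bigT] by blast
      hence "deriv Rs [bigT Cs] Bot" by (rule sch_wF[OF wF])
      hence "deriv Rs (Cs @ []) Bot" using cut0[OF bigT_R] by blast
      hence "Bot \<in> S" using thI[OF thS] Cs(1) by simp
      thus False using S(2) unfolding pth_def by blast
    qed
    from lindenbaum[OF this] obtain T where T: "Nab ` S \<subseteq> T" "pth Rs T" by blast
    have "{T} \<in> Wc Rs" using Wc_single[OF T(2)] .
    moreover have "Rc u {T}" using T(1) S(1) unfolding Rc_def by auto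
    ultimately show "\<exists>v\<in>Wc Rs. Rc u v" by blast
  qed
qed

theorem theorem8p8:
  fixes Rs :: "scheme set" and \<Gamma> :: "'a fm list" and A :: "'a fm"
  assumes "\<forall>(W :: 'a fm set set set) le R V.
             K_model Rs W le R V \<longrightarrow> valid_in W le R V \<Gamma> A"
  shows "deriv Rs \<Gamma> A"
proof (rule ccontr)
  assume nd: "\<not> deriv Rs \<Gamma> A"
  have "cons Rs (set \<Gamma>) {A}" unfolding cons_def
  proof
    assume "\<exists>L Ds. set L \<subseteq> set \<Gamma> \<and> set Ds \<subseteq> {A} \<and> deriv Rs L (dsj Ds)"
    then obtain L Ds where L: "set L \<subseteq> set \<Gamma>" "set Ds \<subseteq> {A}" "deriv Rs L (dsj Ds)" by blast
    have "deriv Rs (L @ []) A" using cut0[OF L(3) dsj_single[OF L(2)]] .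
    hence "deriv Rs \<Gamma> A" by (rule mono) (use L(1) in simp)
    thus False using nd by blast
  qed
  from lindenbaum[OF this] obtain M where M: "set \<Gamma> \<subseteq> M" "pth Rs M" "M \<inter> {A} = {}" by blast
  have val: "valid_in (Wc Rs) lec Rc (Vc Rs) \<Gamma> A" using assms K_c by blast
  have "{M} \<in> Wc Rs" using Wc_single[OF M(2)] .
  moreover have "\<forall>B\<in>set \<Gamma>. forces (Wc Rs) lec Rc (Vc Rs) {M} B" using M(1) truth[OF M(2)] by blast
  ultimately have "forces (Wc Rs) lec Rc (Vc Rs) {M} A" using val unfolding valid_in_def by blast
  hence "A \<in> M" using truth[OF M(2)] by blast
  thus False using M(3) by blast
qed

end
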